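(* Let $A$ be an antilinear operator on a complex $n$-dimensional space $W$, let $\lambda>0$ be real, and for $k\ge0$ put $W_\lambda^{(k)}=\ker(A^2-\lambda^2 I)^k$ (a complex subspace) and $\widetilde W_\lambda^{(k)}=\{x\in W:(A-\lambda I)^kx=0\}$ (a real subspace). Then any basis of the real vector space $\widetilde W_\lambda^{(k)}$ is also a basis of the complex vector space $W_\lambda^{(k)}$.
   Context: An antilinear operator satisfies $A(zv+w)=\bar z Av+Aw$. Since $\lambda$ is real, $A-\lambda I$ is antilinear and its iterates' kernels are real vector subspaces. *)

theory Defs
  imports "HOL-Analysis.Analysis"
begin

text \<open>W = complex^'n, a complex vector space of dimension CARD('n).
  Complex scalar multiplication is (*s); the underlying real structure is scaleR.\<close>

definition antilinear :: "(complex^'n \<Rightarrow> complex^'n) \<Rightarrow> bool" where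
  "antilinear A \<longleftrightarrow> (\<forall>z v w. A (z *s v + w) = cnj z *s A v + A w)"

definition gen_eig_C :: "(complex^'n \<Rightarrow> complex^'n) \<Rightarrow> real \<Rightarrow> nat \<Rightarrow> (complex^'n) set" where
  "gen_eig_C A l k = {x. ((\<lambda>y. A (A y) - (complex_of_real (l^2)) *s y) ^^ k) x = 0}"

definition gen_eig_R :: "(complex^'n \<Rightarrow> complex^'n) \<Rightarrow> real \<Rightarrow> nat \<Rightarrow> (complex^'n) set" where
  "gen_eig_R A l k = {x. ((\<lambda>y. A y - l *\<^sub>R y) ^^ k) x = 0}"

definition real_basis_of :: "(complex^'n) set \<Rightarrow> (complex^'n) set \<Rightarrow> bool" where
  "real_basis_of B S \<longleftrightarrow> independent B \<and> span B = S"

definition complex_basis_of :: "(complex^'n) set \<Rightarrow> (complex^'n) set \<Rightarrow> bool" where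
  "complex_basis_of B S \<longleftrightarrow> \<not> vec.dependent B \<and> vec.span B = S"

end

theory Submission
  imports Defs
begin

lemma scaleR_as_smult: "(r::real) *\<^sub>R (x::complex^'n) = complex_of_real r *s x"
  by (simp add: vec_eq_iff complex_eq_iff)

lemma anti_basic:
  assumes "antilinear A"
  shows "A (x + y) = A x + A y" "A (z *s x) = cnj z *s A x" "A 0 = 0"
proof -
  have a: "\<And>z v w. A (z *s v + w) = cnj z *s A v + A w" using assms unfolding antilinear_def by blast
  have "A 0 = A 0 + A 0" using a[of 1 0 0] by simp
  thus z: "A 0 = 0" by simp
  show "A (x + y) = A x + A y" using a[of 1 x y] by simp
  show "A (z *s x) = cnj z *s A x" using a[of z x 0] z by simp
qed

lemma anti_linear:
  assumes "antilinear A"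
  shows "linear A"
proof (rule linearI)
  fix x y show "A (x + y) = A x + A y" using anti_basic[OF assms] by simp
next
  fix c x show "A (c *\<^sub>R x) = c *\<^sub>R A x"
    using anti_basic(2)[OF assms, of "complex_of_real c" x] by (simp add: scaleR_as_smult)
qed

lemma linear_funpow: "linear (f::'a::real_vector \<Rightarrow> 'a) \<Longrightarrow> linear (f ^^ n)"
  by (induction n) (auto intro: linear_compose linear_id simp: id_def[symmetric])

lemma funpow_commute_gen:
  assumes "\<And>x. f (g x) = g (f x)"
  shows "(f ^^ n) (g x) = g ((f ^^ n) x)"
  by (induction n) (auto simp: assms)

lemma decomp:
  fixes T S :: "'a::real_vector \<Rightarrow> 'a"
  assumes lT: "linear T" and lS: "linear S" and c: "\<And>x. T (S x) = S (T x)"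
    and d: "\<And>x. S x - T x = m *\<^sub>R x" and m: "m \<noteq> 0"
  shows "(T ^^ a) ((S ^^ b) x) = 0 \<Longrightarrow> \<exists>u w. x = u + w \<and> (T ^^ a) u = 0 \<and> (S ^^ b) w = 0"
proof (induction a arbitrary: b x)
  case 0
  then show ?case by (intro exI[of _ 0] exI[of _ x]) (simp add: linear_0[OF linear_funpow[OF lS]])
next
  case (Suc a)
  note IHa = Suc.IH
  show ?case using Suc.prems
  proof (induction b arbitrary: x)
    case 0
    then show ?case by (intro exI[of _ x] exI[of _ 0]) (simp add: linear_0[OF linear_funpow[OF lT]])
  next
    case (Suc b)
    have lTa: "linear (T ^^ n)" for n by (rule linear_funpow[OF lT])
    have lSa: "linear (S ^^ n)" for n by (rule linear_funpow[OF lS])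
    have cc: "(S ^^ n) (T y) = T ((S ^^ n) y)" for n y
      using funpow_commute_gen[of S T n y] c by metis
    have e1: "(T ^^ Suc a) ((S ^^ b) (S x)) = 0"
      using Suc.prems by (simp add: funpow_Suc_right del: funpow.simps)
    obtain u1 w1 where h1: "S x = u1 + w1" "(T ^^ Suc a) u1 = 0" "(S ^^ b) w1 = 0"
      using Suc.IH[OF e1] by blast
    have w1: "(S ^^ Suc b) w1 = 0" using h1(3) linear_0[OF lS] by simp
    have e2: "(T ^^ a) ((S ^^ Suc b) (T x)) = 0"
      using Suc.prems cc[of "Suc b" x] by (simp add: funpow_Suc_right del: funpow.simps)
    obtain u2 w2 where h2: "T x = u2 + w2" "(T ^^ a) u2 = 0" "(S ^^ Suc b) w2 = 0"
      using IHa[OF e2] by blast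
    have u2: "(T ^^ Suc a) u2 = 0" using h2(2) linear_0[OF lT]
      by (simp add: funpow_Suc_right del: funpow.simps) (metis linear_0[OF lT] funpow_commute_gen)
    have xx: "x = (1/m) *\<^sub>R (S x - T x)" using d[of x] m by simp
    show ?case
    proof (intro exI conjI)
      show "x = (1/m) *\<^sub>R (u1 - u2) + (1/m) *\<^sub>R (w1 - w2)"
        using xx h1(1) h2(1) by (simp add: algebra_simps)
      show "(T ^^ Suc a) ((1/m) *\<^sub>R (u1 - u2)) = 0"
        using h1(2) u2 by (simp add: linear_scale[OF lTa] linear_diff[OF lTa] del: funpow.simps)
      show "(S ^^ Suc b) ((1/m) *\<^sub>R (w1 - w2)) = 0"
        using w1 h2(3) by (simp add: linear_scale[OF lSa] linear_diff[OF lSa] del: funpow.simps)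
    qed
  qed
qed

lemma inter_zero:
  fixes T S :: "'a::real_vector \<Rightarrow> 'a"
  assumes lT: "linear T" and lS: "linear S" and c: "\<And>x. T (S x) = S (T x)"
    and d: "\<And>x. S x - T x = m *\<^sub>R x" and m: "m \<noteq> 0"
  shows "(T ^^ a) x = 0 \<Longrightarrow> (S ^^ b) x = 0 \<Longrightarrow> x = 0"
proof (induction a arbitrary: x)
  case 0 then show ?case by simp
next
  case (Suc a)
  define y where "y = (T ^^ a) x"
  have Ty: "T y = 0" using Suc.prems(1) by (simp add: y_def)
  have Sy: "S y = m *\<^sub>R y" using d[of y] Ty by simp
  have pw: "(S ^^ n) y = (m ^ n) *\<^sub>R y" for n
    by (induction n) (auto simp: linear_scale[OF lS] Sy)
  have "(S ^^ b) y = (T ^^ a) ((S ^^ b) x)"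
    unfolding y_def by (rule funpow_commute_gen[symmetric]) (metis funpow_commute_gen c)
  also have "\<dots> = 0" using Suc.prems(2) linear_0[OF linear_funpow[OF lT]] by simp
  finally have "y = 0" using pw[of b] m by simp
  then show ?case using Suc.IH[of x] Suc.prems(2) y_def by simp
qed

lemma smult_funpow:
  fixes f :: "complex^'n \<Rightarrow> complex^'n"
  assumes "\<And>x y. f (x + y) = f x + f y" "\<And>c x. f (c *s x) = c *s f x"
  shows "(f ^^ n) (x + y) = (f ^^ n) x + (f ^^ n) y \<and> (f ^^ n) (c *s x) = c *s (f ^^ n) x"
  by (induction n arbitrary: x y c) (auto simp: assms)

theorem mainTheorem5:
  fixes A :: "complex^'n \<Rightarrow> complex^'n" and l :: real and k :: nat
    and B :: "(complex^'n) set"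
  assumes "antilinear A" and "l > 0"
    and "real_basis_of B (gen_eig_R A l k)"
  shows "complex_basis_of B (gen_eig_C A l k)"
proof -
  note ab = anti_basic[OF assms(1)]
  have lA: "linear A" by (rule anti_linear[OF assms(1)])
  define T where "T = (\<lambda>y. A y - l *\<^sub>R y)"
  define S where "S = (\<lambda>y. A y + l *\<^sub>R y)"
  define S2 where "S2 = (\<lambda>y. - S y)"
  have lT: "linear T" unfolding T_def by (intro linear_compose_sub lA linear_scaleR)
  have lS: "linear S" unfolding S_def by (intro linear_compose_add lA linear_scaleR)
  have lS2: "linear S2" unfolding S2_def by (intro linear_compose_neg lS)
  have c: "T (S x) = S (T x)" for x
    unfolding T_def S_def by (simp add: linear_add[OF lA] linear_diff[OF lA] linear_scale[OF lA] algebra_simps)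
  have d: "S x - T x = (2*l) *\<^sub>R x" for x
  proof -
    have "S x - T x = l *\<^sub>R x + l *\<^sub>R x" unfolding T_def S_def by simp
    also have "\<dots> = (2*l) *\<^sub>R x" by (metis mult_2 scaleR_add_left)
    finally show ?thesis .
  qed
  have m: "2*l \<noteq> 0" using assms(2) by simp
  have Qeq: "(\<lambda>y. A (A y) - complex_of_real (l^2) *s y) = (\<lambda>y. T (S y))"
  proof
    fix y :: "complex^'n"
    have "complex_of_real (l^2) *s y = (l^2) *\<^sub>R y" by (simp add: scaleR_as_smult)
    then show "A (A y) - complex_of_real (l^2) *s y = T (S y)"
      unfolding T_def S_def by (simp add: linear_add[OF lA] linear_scale[OF lA] algebra_simps power2_eq_square)
  qed
  have TkSk_comm: "(T ^^ a) ((S ^^ b) x) = (S ^^ b) ((T ^^ a) x)" for a b x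
    by (rule funpow_commute_gen) (metis funpow_commute_gen c)
  have Qk: "((\<lambda>y. T (S y)) ^^ n) x = (T ^^ n) ((S ^^ n) x)" for n x
  proof (induction n arbitrary: x)
    case 0 then show ?case by simp
  next
    case (Suc n)
    have e: "S ((T ^^ n) z) = (T ^^ n) (S z)" for z using TkSk_comm[of n 1 z] by simp
    have "((\<lambda>y. T (S y)) ^^ Suc n) x = T (S ((T ^^ n) ((S ^^ n) x)))" using Suc.IH by simp
    also have "\<dots> = (T ^^ Suc n) ((S ^^ Suc n) x)" by (simp only: e funpow.simps comp_def)
    finally show ?case .
  qed
  have K: "gen_eig_R A l k = {x. (T ^^ k) x = 0}" unfolding gen_eig_R_def T_def by simp
  have C: "gen_eig_C A l k = {x. (T ^^ k) ((S ^^ k) x) = 0}" unfolding gen_eig_C_def Qeq Qk by simp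
  have J1: "T (\<i> *s y) = \<i> *s S2 y" for y
  proof -
    have "l *\<^sub>R (\<i> *s y) = \<i> *s (l *\<^sub>R y)" by (simp add: scaleR_as_smult vector_smult_assoc mult.commute)
    then show ?thesis unfolding T_def S2_def S_def using ab(2)[of \<i> y]
      by (simp add: vec_eq_iff algebra_simps complex_eq_iff)
  qed
  have Jn: "(T ^^ n) (\<i> *s y) = \<i> *s (S2 ^^ n) y" for n y
    by (induction n) (auto simp: J1)
  have S2n: "(S2 ^^ n) y = ((-1)^n) *\<^sub>R (S ^^ n) y" for n y
    by (induction n) (auto simp: S2_def linear_scale[OF lS])
  have Jinj: "\<i> *s z = 0 \<longleftrightarrow> z = 0" for z :: "complex^'n"
    by (simp add: vec_eq_iff)
  have JK: "(T ^^ k) (\<i> *s y) = 0 \<longleftrightarrow> (S ^^ k) y = 0" for y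
    unfolding Jn Jinj S2n by simp
  have indB: "independent B" and spB: "span B = {x. (T ^^ k) x = 0}"
    using assms(3) K unfolding real_basis_of_def by auto
  have inter: "(T ^^ k) x = 0 \<Longrightarrow> (S ^^ k) x = 0 \<Longrightarrow> x = 0" for x
    by (rule inter_zero[OF lT lS c d m])
  have lTk: "linear (T ^^ n)" for n by (rule linear_funpow[OF lT])
  have lSk: "linear (S ^^ n)" for n by (rule linear_funpow[OF lS])
  have RC: "span B \<subseteq> vec.span B"
  proof (rule span_minimal)
    show "B \<subseteq> vec.span B" using vec.span_base by blast
    show "subspace (vec.span B)" unfolding subspace_def
      by (auto simp: scaleR_as_smult intro: vec.span_add vec.span_scale vec.span_zero)
  qed
  have indC: "\<not> vec.dependent B"
  proof
    assume "vec.dependent B"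
    then obtain t u where t: "finite t" "t \<subseteq> B" "(\<Sum>v\<in>t. u v *s v) = 0" and v0: "\<exists>v\<in>t. u v \<noteq> 0"
      unfolding vec.dependent_explicit by blast
    define p where "p = (\<Sum>v\<in>t. Re (u v) *\<^sub>R v)"
    define q where "q = (\<Sum>v\<in>t. Im (u v) *\<^sub>R v)"
    have trm: "u v *s v = Re (u v) *\<^sub>R v + \<i> *s (Im (u v) *\<^sub>R v)" for v
      by (simp add: vec_eq_iff complex_eq_iff)
    have "(\<Sum>v\<in>t. u v *s v) = p + \<i> *s q"
      unfolding p_def q_def trm sum.distrib vec.scale_sum_right by simp
    hence pq: "p + \<i> *s q = 0" using t(3) by simp
    have pK: "(T ^^ k) p = 0"
    proof -
      have "p \<in> span B" unfolding p_def using t(2)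
        by (intro real_vector.span_sum span_scale real_vector.span_base) auto
      thus ?thesis using spB by auto
    qed
    have qK: "(T ^^ k) q = 0"
    proof -
      have "q \<in> span B" unfolding q_def using t(2)
        by (intro real_vector.span_sum span_scale real_vector.span_base) auto
      thus ?thesis using spB by auto
    qed
    have "p = \<i> *s (- q)" using pq by (simp add: eq_neg_iff_add_eq_0 vec_eq_iff)
    hence "(T ^^ k) (\<i> *s (-q)) = 0" using pK by metis
    hence "(S ^^ k) (-q) = 0" using JK by blast
    hence "(S ^^ k) q = 0" using linear_neg[OF lSk] by (metis neg_equal_0_iff_equal)
    hence q0: "q = 0" using inter qK by blast
    hence p0: "p = 0" using pq by simp
    have t2: "t \<subseteq> B" by fact
    have I: "\<And>t u v. finite t \<Longrightarrow> t \<subseteq> B \<Longrightarrow> (\<Sum>v\<in>t. u v *\<^sub>R v) = 0 \<Longrightarrow> v \<in> t \<Longrightarrow> u v = 0"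
      using indB unfolding real_vector.independent_explicit_module by blast
    have "\<forall>v\<in>t. Re (u v) = 0" using I[OF t(1) t2 p0[unfolded p_def]] by blast
    moreover have "\<forall>v\<in>t. Im (u v) = 0" using I[OF t(1) t2 q0[unfolded q_def]] by blast
    ultimately show False using v0 by (simp add: complex_eq_iff)
  qed
  have spC: "vec.span B = gen_eig_C A l k"
  proof
    show "vec.span B \<subseteq> gen_eig_C A l k"
    proof (rule vec.span_minimal)
      show "B \<subseteq> gen_eig_C A l k"
      proof
        fix x assume "x \<in> B"
        hence "x \<in> span B" by (rule real_vector.span_base)
        hence "(T ^^ k) x = 0" using spB by auto
        hence "(S ^^ k) ((T ^^ k) x) = 0" using linear_0[OF lSk] by simp
        thus "x \<in> gen_eig_C A l k" unfolding C using TkSk_comm by simp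
      qed
      have Qadd: "T (S (x + y)) = T (S x) + T (S y)" for x y
        using linear_add[OF lT] linear_add[OF lS] by simp
      have Qsm: "T (S (z *s x)) = z *s T (S x)" for z x
        unfolding Qeq[symmetric, THEN fun_cong] using ab
        by (simp add: vector_smult_assoc mult.commute vec.scale_right_diff_distrib)
      note fp = smult_funpow[of "\<lambda>y. T (S y)", OF Qadd Qsm]
      show "vec.subspace (gen_eig_C A l k)"
        unfolding vec.subspace_def gen_eig_C_def Qeq
      proof (intro conjI ballI allI)
        have "((\<lambda>y. T (S y)) ^^ k) (0 *s 0) = 0 *s ((\<lambda>y. T (S y)) ^^ k) 0" using fp by blast
        thus "0 \<in> {x. ((\<lambda>y. T (S y)) ^^ k) x = 0}" by simp
      qed (auto simp: fp)
    qed
  next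
    show "gen_eig_C A l k \<subseteq> vec.span B"
    proof
      fix x assume "x \<in> gen_eig_C A l k"
      hence "(T ^^ k) ((S ^^ k) x) = 0" unfolding C by simp
      then obtain u w where uw: "x = u + w" "(T ^^ k) u = 0" "(S ^^ k) w = 0"
        using decomp[OF lT lS c d m] by blast
      have "u \<in> vec.span B" using uw(2) spB RC by auto
      moreover have "\<i> *s w \<in> vec.span B" using uw(3) JK spB RC by auto
      hence "(-\<i>) *s (\<i> *s w) \<in> vec.span B" by (rule vec.span_scale)
      hence "w \<in> vec.span B" by (simp add: vector_smult_assoc)
      ultimately show "x \<in> vec.span B" using uw(1) vec.span_add by simp
    qed
  qed
  show ?thesis unfolding complex_basis_of_def using indC spC by simp
qed

end
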